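(* Let $f:\mathbb{R}\to\mathbb{C}$ be Lebesgue measurable and suppose there exist constants $a,c\in\mathbb{C}$ and $b\in\mathbb{R}$ such that $f(x)=ce^{ax}$ for almost every $x>b$, or alternatively $f(x)=ce^{ax}$ for almost every $x<b$. Then $\mathcal G(f,\mathbb{R}^2)$ is linearly independent, unless $f(x)=ce^{ax}$ for almost every $x\in\mathbb{R}$.
   Context: For $\alpha,\beta\in\mathbb{R}$, $M_\alpha T_\beta f(x)=e^{2\pi i \alpha x}f(x-\beta)$, and $\mathcal G(f,\mathbb{R}^2)=\{M_\alpha T_\beta f:\alpha,\beta\in\mathbb{R}\}$. Measurable functions equal a.e. are identified; $\mathcal G(f,\mathbb{R}^2)$ is linearly independent if every finite linear combination $\sum c_{(\alpha,\beta)}M_\alpha T_\beta f$ over distinct pairs $(\alpha,\beta)$ with coefficients not all zero is not zero almost everywhere. *)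

theory Defs
  imports "HOL-Analysis.Analysis"
begin

definition MT :: "real \<Rightarrow> real \<Rightarrow> (real \<Rightarrow> complex) \<Rightarrow> real \<Rightarrow> complex" where
  "MT \<alpha> \<beta> f x = exp (2 * pi * \<i> * complex_of_real (\<alpha> * x)) * f (x - \<beta>)"

text \<open>Linear independence of G(f, R^2) = {M_alpha T_beta f : alpha, beta real}, with functions
  identified when equal a.e.: every finite linear combination over distinct pairs
  (alpha,beta) that vanishes a.e. has all coefficients zero.\<close>
definition gabor_lin_indep :: "(real \<Rightarrow> complex) \<Rightarrow> bool" where
  "gabor_lin_indep f \<longleftrightarrow>
     (\<forall>S :: (real \<times> real) set. \<forall>c :: real \<times> real \<Rightarrow> complex.
        finite S \<longrightarrow>
        (AE x in lebesgue. (\<Sum>p\<in>S. c p * MT (fst p) (snd p) f x) = 0) \<longrightarrow>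
        (\<forall>p\<in>S. c p = 0))"

end

theory Submission
  imports Defs "HOL-Complex_Analysis.Complex_Analysis"
begin

lemma AE_affine:
  fixes t c :: real
  assumes c: "c \<noteq> 0" and P: "AE x in lebesgue. P x"
  shows "AE x in lebesgue. P (t + c * x)"
proof -
  from P obtain N where N: "negligible N" "{x. \<not> P x} \<subseteq> N"
    by (auto simp: eventually_ae_filter_negligible)
  have dv: "((\<lambda>y. (y - t) / c) has_real_derivative (1/c)) (at x within N)" for x
    using c by (auto intro!: derivative_eq_intros)
  have "(\<lambda>y. (y - t) / c) differentiable_on N"
    unfolding differentiable_on_def using dv real_differentiable_def by blast
  then have "negligible ((\<lambda>y. (y - t) / c) ` N)"
    by (intro negligible_differentiable_image_negligible) (auto simp: N)
  moreover have "{x. \<not> P (t + c * x)} \<subseteq> (\<lambda>y. (y - t) / c) ` N"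
  proof
    fix x assume "x \<in> {x. \<not> P (t + c * x)}"
    then have "t + c * x \<in> N" using N(2) by auto
    moreover have "x = ((t + c * x) - t) / c" using c by simp
    ultimately show "x \<in> (\<lambda>y. (y - t) / c) ` N" by blast
  qed
  ultimately show ?thesis by (auto simp: eventually_ae_filter_negligible)
qed

lemma not_AE_open:
  fixes I :: "real set"
  assumes "open I" "I \<noteq> {}" "AE x in lebesgue. x \<notin> I"
  shows False
proof -
  from assms(3) obtain N where N: "negligible N" "{x. \<not> x \<notin> I} \<subseteq> N"
    by (auto simp: eventually_ae_filter_negligible)
  then have "negligible I" by (auto intro: negligible_subset)
  then show False using open_not_negligible assms(1,2) by blast
qed

lemma expo_indep:
  fixes lam c :: "'a \<Rightarrow> complex"
  assumes "finite A" "inj_on lam A" "\<And>z. (\<Sum>a\<in>A. c a * exp (lam a * z)) = 0"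
  shows "\<forall>a\<in>A. c a = 0"
  using assms
proof (induction A arbitrary: c rule: finite_induct)
  case empty thus ?case by simp
next
  case (insert m A)
  define h where "h z = (\<Sum>a\<in>insert m A. c a * exp (lam a * z))" for z
  have hd: "(h has_field_derivative (\<Sum>a\<in>insert m A. c a * lam a * exp (lam a * z))) (at z)" for z
    unfolding h_def by (auto intro!: derivative_eq_intros sum.cong)
  have h0: "h = (\<lambda>_. 0)" using insert.prems by (auto simp: h_def)
  have D: "(\<Sum>a\<in>insert m A. c a * lam a * exp (lam a * z)) = 0" for z
    using hd[of z] unfolding h0 using DERIV_unique DERIV_const by blast
  have E: "(\<Sum>a\<in>A. (c a * (lam a - lam m)) * exp (lam a * z)) = 0" for z
  proof -
    have "(\<Sum>a\<in>A. (c a * (lam a - lam m)) * exp (lam a * z))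
        = (\<Sum>a\<in>insert m A. (c a * (lam a - lam m)) * exp (lam a * z))"
      using insert.hyps by simp
    also have "\<dots> = (\<Sum>a\<in>insert m A. c a * lam a * exp (lam a * z)) - lam m * h z"
      unfolding h_def by (simp add: sum_distrib_left sum_subtractf[symmetric] algebra_simps)
    also have "\<dots> = 0" using D h0 by simp
    finally show ?thesis .
  qed
  have inj: "inj_on lam A" using insert.prems by auto
  have cA: "\<forall>a\<in>A. c a * (lam a - lam m) = 0"
    using insert.IH[OF inj E] by blast
  have cA': "\<forall>a\<in>A. c a = 0"
  proof
    fix a assume a: "a \<in> A"
    then have "lam a \<noteq> lam m" using insert.prems(1) insert.hyps(2)
      by (metis inj_on_eq_iff insertCI)
    then show "c a = 0" using cA a by auto
  qed
  have "c m = 0" using insert.prems(2)[of 0] cA' insert.hyps by simp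
  then show ?case using cA' by simp
qed


lemma countable_AE_not_in:
  fixes Z :: "real set"
  assumes "countable Z"
  shows "AE x in lebesgue. x \<notin> Z"
proof -
  have "Z \<in> null_sets lebesgue"
    using countable_imp_null_set_lborel[OF assms] null_sets_completionI by blast
  then have "negligible Z" by (simp add: negligible_iff_null_sets)
  then show ?thesis by (auto simp: eventually_ae_filter_negligible)
qed

lemma expsum_zero:
  fixes w :: "'a \<Rightarrow> complex" and \<phi> :: "'a \<Rightarrow> real" and I :: "real set"
  assumes S: "finite S" and I: "bounded I"
    and nz: "\<not> (AE x in lebesgue. x \<in> I \<longrightarrow>
              (\<Sum>p\<in>S. w p * exp (of_real (2*pi) * \<i> * of_real (\<phi> p * x))) \<noteq> 0)"
  shows "(\<Sum>p\<in>S. w p * exp (of_real (2*pi) * \<i> * of_real (\<phi> p) * z)) = 0"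
proof -
  define F where "F z = (\<Sum>p\<in>S. w p * exp (of_real (2*pi) * \<i> * of_real (\<phi> p) * z))" for z
  define Z where "Z = {x\<in>I. (\<Sum>p\<in>S. w p * exp (of_real (2*pi) * \<i> * of_real (\<phi> p * x))) = 0}"
  have "\<not> countable Z"
  proof
    assume "countable Z"
    from countable_AE_not_in[OF this] have "AE x in lebesgue. x \<notin> Z" .
    then have "AE x in lebesgue. x \<in> I \<longrightarrow>
              (\<Sum>p\<in>S. w p * exp (of_real (2*pi) * \<i> * of_real (\<phi> p * x))) \<noteq> 0"
      by eventually_elim (auto simp: Z_def)
    with nz show False by blast
  qed
  then have "infinite Z" using countable_finite by blast
  moreover have "bounded Z" using I by (rule bounded_subset) (auto simp: Z_def)
  ultimately obtain \<xi> where "\<xi> islimpt Z" using bounded_infinite_imp_islimpt by blast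
  then obtain X where X: "\<And>n. X n \<in> Z - {\<xi>}" "X \<longlonglongrightarrow> \<xi>"
    unfolding islimpt_sequential by blast
  have "complex_of_real \<xi> islimpt (complex_of_real ` Z)"
    unfolding islimpt_sequential
  proof (intro exI conjI allI)
    show "(\<lambda>n. complex_of_real (X n)) \<longlonglongrightarrow> complex_of_real \<xi>"
      using X(2) by (rule tendsto_of_real)
    fix n show "complex_of_real (X n) \<in> complex_of_real ` Z - {complex_of_real \<xi>}"
      using X(1)[of n] by auto
  qed
  moreover have "F holomorphic_on UNIV"
    unfolding F_def by (intro holomorphic_intros)
  moreover have "F u = 0" if "u \<in> complex_of_real ` Z" for u
    using that by (auto simp: F_def Z_def mult.assoc)
  ultimately have "F z = 0"
    by (intro analytic_continuation[of F UNIV "complex_of_real ` Z" "complex_of_real \<xi>" z]) auto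
  then show ?thesis by (simp add: F_def)
qed


lemma MT_split:
  "MT \<alpha> \<beta> f x = MT \<alpha> \<beta> (\<lambda>y. f y - c * exp (a * of_real y)) x
     + exp (a * of_real x) * (c * exp (- a * of_real \<beta>) * exp (of_real (2*pi) * \<i> * of_real (\<alpha> * x)))"
proof -
  have "exp (a * of_real (x - \<beta>)) = exp (a * of_real x) * exp (- a * of_real \<beta>)"
    by (simp add: algebra_simps exp_diff exp_minus field_simps)
  then show ?thesis unfolding MT_def by (simp add: algebra_simps)
qed

lemma halfline_indep:
  fixes g :: "real \<Rightarrow> complex" and b :: real
  assumes S: "finite S"
    and gtail: "AE x in lebesgue. x > b \<longrightarrow> g x = 0"
    and gnz: "\<not> (AE x in lebesgue. g x = 0)"
    and gsum0: "AE x in lebesgue. (\<Sum>p\<in>S. cc p * MT (fst p) (snd p) g x) = 0"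
  shows "\<forall>p\<in>S. cc p = 0"
proof (rule ccontr)
  assume "\<not> (\<forall>p\<in>S. cc p = 0)"
  define S' where "S' = {p\<in>S. cc p \<noteq> 0}"
  have S'fin: "finite S'" using S by (simp add: S'_def)
  have S'ne: "S' \<noteq> {}" using \<open>\<not> (\<forall>p\<in>S. cc p = 0)\<close> by (auto simp: S'_def)
  have shift: "AE x in lebesgue. P (x - \<beta>)" if "AE x in lebesgue. P x" for P and \<beta> :: real
    using AE_affine[OF _ that, of 1 "-\<beta>"] by simp
  have sum'0: "AE x in lebesgue. (\<Sum>p\<in>S'. cc p * MT (fst p) (snd p) g x) = 0"
    using gsum0
  proof eventually_elim
    case (elim x)
    have "(\<Sum>p\<in>S'. cc p * MT (fst p) (snd p) g x) = (\<Sum>p\<in>S. cc p * MT (fst p) (snd p) g x)"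
      using S by (intro sum.mono_neutral_left) (auto simp: S'_def)
    then show ?case using elim by simp
  qed
  define T where "T = {t. AE x in lebesgue. x > t \<longrightarrow> g x = 0}"
  have Tup: "t' \<in> T" if "t \<in> T" "t \<le> t'" for t t'
    using that unfolding T_def by (auto elim!: eventually_mono)
  have bT: "b \<in> T" using gtail by (simp add: T_def)
  have bdd: "bdd_below T"
  proof (rule ccontr)
    assume nb: "\<not> bdd_below T"
    have "- real n \<in> T" for n :: nat
    proof -
      from nb obtain t where "t \<in> T" "t < - real n"
        unfolding bdd_below_def by (meson not_le)
      then show ?thesis using Tup by auto
    qed
    then have "\<forall>n::nat. AE x in lebesgue. x > - real n \<longrightarrow> g x = 0" by (simp add: T_def)
    then have "AE x in lebesgue. \<forall>n::nat. x > - real n \<longrightarrow> g x = 0"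
      by (subst AE_all_countable) blast
    then have "AE x in lebesgue. g x = 0"
    proof eventually_elim
      case (elim x)
      obtain n :: nat where "real n > - x" using reals_Archimedean2 by blast
      then have "- real n < x" by linarith
      then show ?case using elim by blast
    qed
    with gnz show False by blast
  qed
  define s where "s = Inf T"
  have s_le: "s \<le> t" if "t \<in> T" for t using cInf_lower[OF that bdd] by (simp add: s_def)
  have above: "AE x in lebesgue. x > s \<longrightarrow> g x = 0"
  proof -
    have "s + 1 / real (Suc n) \<in> T" for n
    proof -
      have "Inf T < s + 1 / real (Suc n)" by (simp add: s_def)
      then obtain t where "t \<in> T" "t < s + 1 / real (Suc n)"
        using cInf_less_iff[of T] bT bdd by blast
      then show ?thesis using Tup by auto
    qed
    then have "\<forall>n. AE x in lebesgue. x > s + 1 / real (Suc n) \<longrightarrow> g x = 0" by (simp add: T_def)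
    then have "AE x in lebesgue. \<forall>n. x > s + 1 / real (Suc n) \<longrightarrow> g x = 0"
      by (subst AE_all_countable) blast
    then show ?thesis
    proof eventually_elim
      case (elim x)
      show ?case
      proof
        assume "x > s"
        then obtain n where "1 / real (Suc n) < x - s" using reals_Archimedean[of "x - s"]
          by (metis diff_gt_0_iff_gt inverse_eq_divide)
        then have "s + 1 / real (Suc n) < x" by linarith
        then show "g x = 0" using elim by blast
      qed
    qed
  qed
  have below: "\<not> (AE x in lebesgue. s - \<epsilon> < x \<and> x < s \<longrightarrow> g x = 0)" if "\<epsilon> > 0" for \<epsilon>
  proof
    assume A: "AE x in lebesgue. s - \<epsilon> < x \<and> x < s \<longrightarrow> g x = 0"
    have "AE x in lebesgue. x \<notin> {s}" by (rule countable_AE_not_in) auto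
    with A above have "AE x in lebesgue. x > s - \<epsilon> \<longrightarrow> g x = 0"
      by eventually_elim (metis linorder_neqE_linordered_idom singletonI)
    then have "s - \<epsilon> \<in> T" by (simp add: T_def)
    then show False using s_le that by fastforce
  qed
  define \<beta> where "\<beta> = Max (snd ` S')"
  have \<beta>ge: "snd p \<le> \<beta>" if "p \<in> S'" for p using S'fin that by (auto simp: \<beta>_def)
  have \<beta>in: "\<beta> \<in> snd ` S'" using S'fin S'ne by (simp add: \<beta>_def)
  define \<epsilon> where "\<epsilon> = Min (insert 1 ((\<lambda>p. \<beta> - snd p) ` {p\<in>S'. snd p < \<beta>}))"
  have \<epsilon>pos: "\<epsilon> > 0" using S'fin by (auto simp: \<epsilon>_def)
  have \<epsilon>le: "snd p \<le> \<beta> - \<epsilon>" if "p \<in> S'" "snd p \<noteq> \<beta>" for p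
  proof -
    have "snd p < \<beta>" using \<beta>ge[OF that(1)] that(2) by simp
    then have "\<epsilon> \<le> \<beta> - snd p" unfolding \<epsilon>_def using S'fin that(1)
      by (intro Min_le) auto
    then show ?thesis by simp
  qed
  define I where "I = {s + \<beta> - \<epsilon> <..< s + \<beta>}"
  define S'' where "S'' = {p\<in>S'. snd p = \<beta>}"
  define P where "P x = (\<Sum>p\<in>S''. cc p * exp (of_real (2*pi) * \<i> * of_real (fst p * x)))" for x
  have others: "AE x in lebesgue. x \<in> I \<longrightarrow> (\<forall>p\<in>S'. snd p \<noteq> \<beta> \<longrightarrow> g (x - snd p) = 0)"
  proof -
    have "\<forall>p\<in>S'. AE x in lebesgue. x - snd p > s \<longrightarrow> g (x - snd p) = 0"
      using shift[OF above] by blast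
    then have "AE x in lebesgue. \<forall>p\<in>S'. x - snd p > s \<longrightarrow> g (x - snd p) = 0"
      using S'fin by (simp add: eventually_ball_finite)
    then show ?thesis
    proof eventually_elim
      case (elim x)
      show ?case
      proof (intro impI ballI)
        fix p assume "x \<in> I" "p \<in> S'" "snd p \<noteq> \<beta>"
        then have "x - snd p > s" using \<epsilon>le[of p] by (auto simp: I_def)
        then show "g (x - snd p) = 0" using elim \<open>p \<in> S'\<close> by blast
      qed
    qed
  qed
  have Pg: "AE x in lebesgue. x \<in> I \<longrightarrow> P x * g (x - \<beta>) = 0"
    using others sum'0
  proof eventually_elim
    case (elim x)
    show ?case
    proof
      assume xI: "x \<in> I"
      have "(\<Sum>p\<in>S'. cc p * MT (fst p) (snd p) g x) = (\<Sum>p\<in>S''. cc p * MT (fst p) (snd p) g x)"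
        using S'fin elim(1) xI by (intro sum.mono_neutral_right) (auto simp: S''_def MT_def)
      also have "\<dots> = P x * g (x - \<beta>)"
        unfolding P_def sum_distrib_right by (intro sum.cong) (auto simp: S''_def MT_def)
      finally show "P x * g (x - \<beta>) = 0" using elim(2) by simp
    qed
  qed
  have gI: "\<not> (AE x in lebesgue. x \<in> I \<longrightarrow> g (x - \<beta>) = 0)"
  proof
    assume "AE x in lebesgue. x \<in> I \<longrightarrow> g (x - \<beta>) = 0"
    from AE_affine[OF _ this, of 1 \<beta>]
    have "AE x in lebesgue. \<beta> + 1 * x \<in> I \<longrightarrow> g (\<beta> + 1 * x - \<beta>) = 0" by simp
    then have "AE x in lebesgue. s - \<epsilon> < x \<and> x < s \<longrightarrow> g x = 0"
      by eventually_elim (auto simp: I_def)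
    with below[OF \<epsilon>pos] show False by blast
  qed
  have "\<not> (AE x in lebesgue. x \<in> I \<longrightarrow> P x \<noteq> 0)"
  proof
    assume "AE x in lebesgue. x \<in> I \<longrightarrow> P x \<noteq> 0"
    with Pg have "AE x in lebesgue. x \<in> I \<longrightarrow> g (x - \<beta>) = 0" by eventually_elim auto
    with gI show False by blast
  qed
  then have Pz: "(\<Sum>p\<in>S''. cc p * exp (of_real (2*pi) * \<i> * of_real (fst p) * z)) = 0" for z
    unfolding P_def using S'fin
    by (intro expsum_zero[of S'' I]) (auto simp: S''_def I_def)
  have inj: "inj_on (\<lambda>p. of_real (2*pi) * \<i> * of_real (fst p)) S''"
    by (auto simp: inj_on_def S''_def prod_eq_iff)
  have "\<forall>p\<in>S''. cc p = 0"
    using S'fin inj Pz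
    by (intro expo_indep[of S'' "\<lambda>p. of_real (2*pi) * \<i> * of_real (fst p)" cc])
       (auto simp: S''_def mult.assoc)
  moreover obtain p where "p \<in> S'" "snd p = \<beta>" using \<beta>in by auto
  ultimately show False unfolding S''_def S'_def by blast
qed

lemma right_case:
  fixes f :: "real \<Rightarrow> complex" and a c :: complex and b :: real
  assumes tail: "AE x in lebesgue. x > b \<longrightarrow> f x = c * exp (a * complex_of_real x)"
    and notall: "\<not> (AE x in lebesgue. f x = c * exp (a * complex_of_real x))"
  shows "gabor_lin_indep f"
  unfolding gabor_lin_indep_def
proof (intro allI impI)
  fix S :: "(real \<times> real) set" and cc :: "real \<times> real \<Rightarrow> complex"
  assume S: "finite S"
    and sum0: "AE x in lebesgue. (\<Sum>p\<in>S. cc p * MT (fst p) (snd p) f x) = 0"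
  define g where "g x = f x - c * exp (a * of_real x)" for x
  have gtail: "AE x in lebesgue. x > b \<longrightarrow> g x = 0"
    using tail by eventually_elim (simp add: g_def)
  have gnz: "\<not> (AE x in lebesgue. g x = 0)"
  proof
    assume "AE x in lebesgue. g x = 0"
    then have "AE x in lebesgue. f x = c * exp (a * complex_of_real x)"
      by eventually_elim (simp add: g_def)
    with notall show False by blast
  qed
  have shift: "AE x in lebesgue. P (x - \<beta>)" if "AE x in lebesgue. P x" for P and \<beta> :: real
    using AE_affine[OF _ that, of 1 "-\<beta>"] by simp
  define B where "B = b + Max (insert 0 (snd ` S))"
  have allg0: "AE x in lebesgue. x > B \<longrightarrow> (\<forall>p\<in>S. g (x - snd p) = 0)"
  proof -
    have "\<forall>p\<in>S. AE x in lebesgue. x - snd p > b \<longrightarrow> g (x - snd p) = 0"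
      using shift[OF gtail] by blast
    then have "AE x in lebesgue. \<forall>p\<in>S. x - snd p > b \<longrightarrow> g (x - snd p) = 0"
      using S by (simp add: eventually_ball_finite)
    then show ?thesis
    proof eventually_elim
      case (elim x)
      show ?case
      proof (intro impI ballI)
        fix p assume "x > B" "p \<in> S"
        then have "snd p \<le> Max (insert 0 (snd ` S))" using S by (intro Max_ge) auto
        then have "x - snd p > b" using \<open>x > B\<close> by (simp add: B_def)
        then show "g (x - snd p) = 0" using elim \<open>p \<in> S\<close> by blast
      qed
    qed
  qed
  define Q where "Q x = (\<Sum>p\<in>S. (cc p * (c * exp (- a * of_real (snd p)))) *
                        exp (of_real (2*pi) * \<i> * of_real (fst p * x)))" for x
  have decomp: "(\<Sum>p\<in>S. cc p * MT (fst p) (snd p) f x)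
      = (\<Sum>p\<in>S. cc p * MT (fst p) (snd p) g x) + exp (a * of_real x) * Q x" for x
    unfolding Q_def g_def
    by (subst MT_split[where a=a and c=c]) 
       (simp add: sum.distrib sum_distrib_left distrib_left algebra_simps)
  have Qev: "AE x in lebesgue. x \<in> {B<..<B+1} \<longrightarrow> Q x = 0"
    using sum0 allg0
  proof eventually_elim
    case (elim x)
    show ?case
    proof
      assume "x \<in> {B<..<B+1}"
      then have "\<forall>p\<in>S. g (x - snd p) = 0" using elim by auto
      then have "(\<Sum>p\<in>S. cc p * MT (fst p) (snd p) g x) = 0"
        by (intro sum.neutral) (simp add: MT_def)
      then show "Q x = 0" using elim(1) decomp[of x] by simp
    qed
  qed
  have Q0: "Q x = 0" for x
  proof -
    have "\<not> (AE x in lebesgue. x \<in> {B<..<B+1} \<longrightarrow> Q x \<noteq> 0)"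
    proof
      assume "AE x in lebesgue. x \<in> {B<..<B+1} \<longrightarrow> Q x \<noteq> 0"
      with Qev have "AE x in lebesgue. x \<notin> {B<..<B+1}" by eventually_elim auto
      then show False by (rule not_AE_open[rotated 2]) auto
    qed
    then have "(\<Sum>p\<in>S. (cc p * (c * exp (- a * of_real (snd p)))) *
                 exp (of_real (2*pi) * \<i> * of_real (fst p) * of_real x)) = 0"
      unfolding Q_def by (intro expsum_zero[OF S, of "{B<..<B+1}"]) auto
    then show ?thesis by (simp add: Q_def mult.assoc)
  qed
  have gsum0: "AE x in lebesgue. (\<Sum>p\<in>S. cc p * MT (fst p) (snd p) g x) = 0"
    using sum0 by eventually_elim (simp add: decomp Q0)
  show "\<forall>p\<in>S. cc p = 0"
    by (rule halfline_indep[OF S gtail gnz gsum0])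
qed



theorem theorem4p1:
  fixes f :: "real \<Rightarrow> complex" and a c :: complex and b :: real
  assumes meas: "f \<in> borel_measurable lebesgue"
    and tail: "(AE x in lebesgue. x > b \<longrightarrow> f x = c * exp (a * complex_of_real x))
             \<or> (AE x in lebesgue. x < b \<longrightarrow> f x = c * exp (a * complex_of_real x))"
  shows "gabor_lin_indep f \<or> (AE x in lebesgue. f x = c * exp (a * complex_of_real x))"
proof (cases "AE x in lebesgue. f x = c * exp (a * complex_of_real x)")
  case True then show ?thesis by blast
next
  case notall: False
  have refl: "AE x in lebesgue. P (- x)" if "AE x in lebesgue. P x" for P :: "real \<Rightarrow> bool"
    using AE_affine[OF _ that, of "-1" 0] by simp
  show ?thesis
  proof (cases "AE x in lebesgue. x > b \<longrightarrow> f x = c * exp (a * complex_of_real x)")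
    case True
    then show ?thesis using right_case[OF True notall] by blast
  next
    case False
    with tail have lt: "AE x in lebesgue. x < b \<longrightarrow> f x = c * exp (a * complex_of_real x)" by blast
    define f2 where "f2 x = f (- x)" for x
    have t2: "AE x in lebesgue. x > - b \<longrightarrow> f2 x = c * exp ((- a) * complex_of_real x)"
      using refl[OF lt] by eventually_elim (auto simp: f2_def)
    have n2: "\<not> (AE x in lebesgue. f2 x = c * exp ((- a) * complex_of_real x))"
    proof
      assume "AE x in lebesgue. f2 x = c * exp ((- a) * complex_of_real x)"
      from refl[OF this] have "AE x in lebesgue. f x = c * exp (a * complex_of_real x)"
        by eventually_elim (simp add: f2_def)
      with notall show False by blast
    qed
    have G2: "gabor_lin_indep f2" by (rule right_case[OF t2 n2])
    have "gabor_lin_indep f"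
      unfolding gabor_lin_indep_def
    proof (intro allI impI)
      fix S :: "(real \<times> real) set" and cc :: "real \<times> real \<Rightarrow> complex"
      assume S: "finite S"
        and sum0: "AE x in lebesgue. (\<Sum>p\<in>S. cc p * MT (fst p) (snd p) f x) = 0"
      define r where "r p = (- fst p, - snd p)" for p :: "real \<times> real"
      have rr: "r (r p) = p" for p by (simp add: r_def)
      have injr: "inj r" by (metis injI rr)
      have A2: "AE x in lebesgue. (\<Sum>q\<in>r ` S. cc (r q) * MT (fst q) (snd q) f2 x) = 0"
        using refl[OF sum0]
      proof eventually_elim
        case (elim x)
        have "(\<Sum>q\<in>r ` S. cc (r q) * MT (fst q) (snd q) f2 x)
            = (\<Sum>p\<in>S. cc (r (r p)) * MT (fst (r p)) (snd (r p)) f2 x)"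
          by (subst sum.reindex) (auto intro: inj_on_subset[OF injr])
        also have "\<dots> = (\<Sum>p\<in>S. cc p * MT (fst p) (snd p) f (- x))"
          by (intro sum.cong) (auto simp: rr r_def MT_def f2_def algebra_simps)
        finally show ?case using elim by simp
      qed
      have fS: "finite (r ` S)" using S by simp
      have Z: "\<forall>q\<in>r ` S. cc (r q) = 0"
        using G2[unfolded gabor_lin_indep_def, rule_format, of "r ` S" "\<lambda>q. cc (r q)", OF fS A2]
        by blast
      show "\<forall>p\<in>S. cc p = 0"
      proof
        fix p assume "p \<in> S"
        then have "r p \<in> r ` S" by (rule imageI)
        with Z have "cc (r (r p)) = 0" by blast
        then show "cc p = 0" by (simp add: rr)
      qed
    qed
    then show ?thesis by blast
  qed
qed

end
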